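(* Let $n>1$ and $m\geq 1$ be natural numbers, and let $p$ be one of the $m$ propositional variables of $\mathcal{L}(n,m)$. Then the formula $[1]p$ is unifiable in $\mathbf{GLP}_n$ but has no maximal unifiers in $\mathbf{GLP}_n$. Consequently, $\mathbf{GLP}_n$ (in the language $\mathcal{L}(n,m)$) has nullary unification type.
   Context: $\mathcal{L}(n,m)$ is the language of propositional polymodal logic with modalities $[0],\dots,[n-1]$ and variables $p_0,\dots,p_{m-1}$; $\langle k\rangle\phi$ abbreviates $\neg[k]\neg\phi$. $\mathbf{GLP}$ is the polymodal logic with modalities $[0],[1],[2],\dots$ axiomatized by: classical tautologies; $[k](\phi\to\psi)\to([k]\phi\to[k]\psi)$; $[k]([k]\phi\to\phi)\to[k]\phi$; $\langle j\rangle\phi\to[k]\langle j\rangle\phi$ for $j<k$; $[j]\phi\to[k]\phi$ for $j\leq k$; with rules modus ponens and necessitation ($\vdash\phi\Rightarrow\vdash[k]\phi$). $\mathbf{GLP}_n$ is the same system restricted to the modalities $[0],\dots,[n-1]$. A substitution is a map on formulas commuting with all connectives and modalities. A unifier of $\phi$ in a logic $L$ is a substitution $\sigma$ with $L\vdash\sigma(\phi)$. For unifiers, $\tau\leq\sigma$ means there is a substitution $\theta$ with $L\vdash\tau(p)\leftrightarrow\theta(\sigma(p))$ for all variables $p$; $\sigma<\tau$ means $\sigma\leq\tau$ and not $\tau\leq\sigma$. A unifier $\sigma$ of $\phi$ is maximal if there is no unifier $\tau$ of $\phi$ with $\sigma<\tau$. $L$ has finitary (resp. infinitary) unification type if every unifiable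 formula has a finite (resp. infinite) complete set of maximal unifiers (a set $\Sigma$ of unifiers such that every unifier is $\leq$ some member of $\Sigma$); $L$ has nullary unification type if it is neither finitary nor infinitary. *)

theory Defs
  imports Main
begin

datatype fm = Var nat | Bot | Imp fm fm | Box nat fm

definition Neg :: "fm \<Rightarrow> fm" where "Neg a = Imp a Bot"
definition Conj :: "fm \<Rightarrow> fm \<Rightarrow> fm" where "Conj a b = Neg (Imp a (Neg b))"
definition Iff :: "fm \<Rightarrow> fm \<Rightarrow> fm" where "Iff a b = Conj (Imp a b) (Imp b a)"
definition Dia :: "nat \<Rightarrow> fm \<Rightarrow> fm" where "Dia k a = Neg (Box k (Neg a))"

fun in_lang :: "nat \<Rightarrow> nat \<Rightarrow> fm \<Rightarrow> bool" where
  "in_lang n m (Var i) = (i < m)"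
| "in_lang n m Bot = True"
| "in_lang n m (Imp a b) = (in_lang n m a \<and> in_lang n m b)"
| "in_lang n m (Box k a) = (k < n \<and> in_lang n m a)"

text \<open>Classical tautologies: boxed subformulas are treated as propositional atoms.\<close>
fun peval :: "(fm \<Rightarrow> bool) \<Rightarrow> fm \<Rightarrow> bool" where
  "peval v (Var i) = v (Var i)"
| "peval v Bot = False"
| "peval v (Imp a b) = (peval v a \<longrightarrow> peval v b)"
| "peval v (Box k a) = v (Box k a)"

definition taut :: "fm \<Rightarrow> bool" where "taut a = (\<forall>v. peval v a)"

inductive GLP :: "nat \<Rightarrow> nat \<Rightarrow> fm \<Rightarrow> bool" for n m where
  tautI: "in_lang n m a \<Longrightarrow> taut a \<Longrightarrow> GLP n m a"
| axK: "k < n \<Longrightarrow> in_lang n m a \<Longrightarrow> in_lang n m b \<Longrightarrow>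
          GLP n m (Imp (Box k (Imp a b)) (Imp (Box k a) (Box k b)))"
| axL: "k < n \<Longrightarrow> in_lang n m a \<Longrightarrow>
          GLP n m (Imp (Box k (Imp (Box k a) a)) (Box k a))"
| axDia: "j < k \<Longrightarrow> k < n \<Longrightarrow> in_lang n m a \<Longrightarrow>
          GLP n m (Imp (Dia j a) (Box k (Dia j a)))"
| axMono: "j \<le> k \<Longrightarrow> k < n \<Longrightarrow> in_lang n m a \<Longrightarrow>
          GLP n m (Imp (Box j a) (Box k a))"
| mp: "GLP n m (Imp a b) \<Longrightarrow> GLP n m a \<Longrightarrow> GLP n m b"
| nec: "k < n \<Longrightarrow> GLP n m a \<Longrightarrow> GLP n m (Box k a)"

fun subst :: "(nat \<Rightarrow> fm) \<Rightarrow> fm \<Rightarrow> fm" where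
  "subst s (Var i) = s i"
| "subst s Bot = Bot"
| "subst s (Imp a b) = Imp (subst s a) (subst s b)"
| "subst s (Box k a) = Box k (subst s a)"

definition is_subst :: "nat \<Rightarrow> nat \<Rightarrow> (nat \<Rightarrow> fm) \<Rightarrow> bool" where
  "is_subst n m s = ((\<forall>i<m. in_lang n m (s i)) \<and> (\<forall>i\<ge>m. s i = Var i))"

definition unifier :: "nat \<Rightarrow> nat \<Rightarrow> (nat \<Rightarrow> fm) \<Rightarrow> fm \<Rightarrow> bool" where
  "unifier n m s a = (is_subst n m s \<and> GLP n m (subst s a))"

definition unifiable :: "nat \<Rightarrow> nat \<Rightarrow> fm \<Rightarrow> bool" where
  "unifiable n m a = (\<exists>s. unifier n m s a)"

definition less_gen :: "nat \<Rightarrow> nat \<Rightarrow> (nat \<Rightarrow> fm) \<Rightarrow> (nat \<Rightarrow> fm) \<Rightarrow> bool" where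
  "less_gen n m t s = (\<exists>th. is_subst n m th \<and>
      (\<forall>i<m. GLP n m (Iff (t i) (subst th (s i)))))"

definition strictly_less_gen :: "nat \<Rightarrow> nat \<Rightarrow> (nat \<Rightarrow> fm) \<Rightarrow> (nat \<Rightarrow> fm) \<Rightarrow> bool" where
  "strictly_less_gen n m s t = (less_gen n m s t \<and> \<not> less_gen n m t s)"

definition maximal_unifier :: "nat \<Rightarrow> nat \<Rightarrow> (nat \<Rightarrow> fm) \<Rightarrow> fm \<Rightarrow> bool" where
  "maximal_unifier n m s a = (unifier n m s a \<and>
      \<not> (\<exists>t. unifier n m t a \<and> strictly_less_gen n m s t))"

definition complete_max_set :: "nat \<Rightarrow> nat \<Rightarrow> (nat \<Rightarrow> fm) set \<Rightarrow> fm \<Rightarrow> bool" where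
  "complete_max_set n m S a = ((\<forall>s\<in>S. maximal_unifier n m s a) \<and>
      (\<forall>t. unifier n m t a \<longrightarrow> (\<exists>s\<in>S. less_gen n m t s)))"

definition finitary :: "nat \<Rightarrow> nat \<Rightarrow> bool" where
  "finitary n m = (\<forall>a. in_lang n m a \<and> unifiable n m a \<longrightarrow>
      (\<exists>S. finite S \<and> complete_max_set n m S a))"

definition infinitary :: "nat \<Rightarrow> nat \<Rightarrow> bool" where
  "infinitary n m = (\<forall>a. in_lang n m a \<and> unifiable n m a \<longrightarrow>
      (\<exists>S. infinite S \<and> complete_max_set n m S a))"

definition nullary :: "nat \<Rightarrow> nat \<Rightarrow> bool" where
  "nullary n m = (\<not> finitary n m \<and> \<not> infinitary n m)"

end

theory Submission
  imports Defs "HOL-Library.Countable"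
begin


definition Top :: fm where "Top = Imp Bot Bot"
definition Disj :: "fm \<Rightarrow> fm \<Rightarrow> fm" where "Disj a b = Imp (Neg a) b"

lemma peval_simps[simp]:
  "peval v (Neg a) = (\<not> peval v a)"
  "peval v (Conj a b) = (peval v a \<and> peval v b)"
  "peval v (Iff a b) = (peval v a = peval v b)"
  "peval v (Disj a b) = (peval v a \<or> peval v b)"
  "peval v Top = True"
  "peval v (Dia k a) = (\<not> v (Box k (Neg a)))"
  by (auto simp: Dia_def Neg_def Conj_def Iff_def Disj_def Top_def)

lemma in_lang_simps[simp]:
  "in_lang n m (Neg a) = in_lang n m a"
  "in_lang n m (Conj a b) = (in_lang n m a \<and> in_lang n m b)"
  "in_lang n m (Iff a b) = (in_lang n m a \<and> in_lang n m b)"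
  "in_lang n m (Disj a b) = (in_lang n m a \<and> in_lang n m b)"
  "in_lang n m (Dia k a) = (k < n \<and> in_lang n m a)"
  "in_lang n m Top"
  by (auto simp: Neg_def Conj_def Iff_def Disj_def Top_def Dia_def)

lemma subst_simps[simp]:
  "subst s (Neg a) = Neg (subst s a)"
  "subst s (Conj a b) = Conj (subst s a) (subst s b)"
  "subst s (Iff a b) = Iff (subst s a) (subst s b)"
  "subst s (Disj a b) = Disj (subst s a) (subst s b)"
  "subst s (Dia k a) = Dia k (subst s a)"
  "subst s Top = Top"
  by (auto simp: Neg_def Conj_def Iff_def Disj_def Top_def Dia_def)

lemma GLP_lang: "GLP n m a \<Longrightarrow> in_lang n m a"
  by (induction rule: GLP.induct) (auto simp: Dia_def Neg_def)

fun imps :: "fm list \<Rightarrow> fm \<Rightarrow> fm" where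
  "imps [] b = b"
| "imps (a # as) b = Imp a (imps as b)"

lemma peval_imps: "peval v (imps as b) = ((\<forall>a\<in>set as. peval v a) \<longrightarrow> peval v b)"
  by (induction as) auto

lemma lang_imps: "in_lang n m (imps as b) = ((\<forall>a\<in>set as. in_lang n m a) \<and> in_lang n m b)"
  by (induction as) auto

lemma GLP_imps_mp: "GLP n m (imps as b) \<Longrightarrow> \<forall>a\<in>set as. GLP n m a \<Longrightarrow> GLP n m b"
proof (induction as)
  case Nil then show ?case by simp
next
  case (Cons a as)
  have 1: "GLP n m (Imp a (imps as b))" using Cons.prems(1) by simp
  have 2: "GLP n m a" using Cons.prems(2) by simp
  have 3: "GLP n m (imps as b)" by (rule GLP.mp[OF 1 2])
  have 4: "\<forall>a\<in>set as. GLP n m a" using Cons.prems(2) by simp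
  show ?case by (rule Cons.IH[OF 3 4])
qed

lemma thm_from:
  assumes "\<forall>a\<in>set as. GLP n m a" "in_lang n m b"
    "\<forall>v. (\<forall>a\<in>set as. peval v a) \<longrightarrow> peval v b"
  shows "GLP n m b"
proof -
  have "\<forall>a\<in>set as. in_lang n m a" using assms(1) GLP_lang by blast
  then have "GLP n m (imps as b)"
    using assms by (intro GLP.tautI) (auto simp: lang_imps taut_def peval_imps)
  then show ?thesis by (rule GLP_imps_mp[OF _ assms(1)])
qed

lemma thm_taut: "in_lang n m b \<Longrightarrow> (\<forall>v. peval v b) \<Longrightarrow> GLP n m b"
  by (rule thm_from[of "[]"]) auto

lemma thm1: "GLP n m a \<Longrightarrow> in_lang n m b \<Longrightarrow> (\<forall>v. peval v a \<longrightarrow> peval v b) \<Longrightarrow> GLP n m b"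
  by (rule thm_from[of "[a]"]) auto

lemma thm2: "GLP n m a \<Longrightarrow> GLP n m a' \<Longrightarrow> in_lang n m b \<Longrightarrow>
   (\<forall>v. peval v a \<longrightarrow> peval v a' \<longrightarrow> peval v b) \<Longrightarrow> GLP n m b"
  by (rule thm_from[of "[a,a']"]) auto

lemma thm3: "GLP n m a \<Longrightarrow> GLP n m a' \<Longrightarrow> GLP n m a'' \<Longrightarrow> in_lang n m b \<Longrightarrow>
   (\<forall>v. peval v a \<longrightarrow> peval v a' \<longrightarrow> peval v a'' \<longrightarrow> peval v b) \<Longrightarrow> GLP n m b"
  by (rule thm_from[of "[a,a',a'']"]) auto

lemma thm4: "GLP n m a \<Longrightarrow> GLP n m a' \<Longrightarrow> GLP n m a'' \<Longrightarrow> GLP n m a''' \<Longrightarrow> in_lang n m b \<Longrightarrow>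
   (\<forall>v. peval v a \<longrightarrow> peval v a' \<longrightarrow> peval v a'' \<longrightarrow> peval v a''' \<longrightarrow> peval v b) \<Longrightarrow> GLP n m b"
  by (rule thm_from[of "[a,a',a'',a''']"]) auto

lemma imp_lang: "GLP n m (Imp a b) \<Longrightarrow> in_lang n m a \<and> in_lang n m b"
  using GLP_lang by fastforce

lemma box_mono: "GLP n m (Imp a b) \<Longrightarrow> k < n \<Longrightarrow> GLP n m (Imp (Box k a) (Box k b))"
  using imp_lang[of n m a b] GLP.nec[of k n m "Imp a b"] GLP.axK[of k n m a b] GLP.mp by blast

lemma box_mono2: "GLP n m (Imp a (Imp b c)) \<Longrightarrow> k < n \<Longrightarrow>
   GLP n m (Imp (Box k a) (Imp (Box k b) (Box k c)))"
proof -
  assume h: "GLP n m (Imp a (Imp b c))" "k < n"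
  then have 1: "GLP n m (Imp (Box k a) (Box k (Imp b c)))" by (rule box_mono)
  have l: "in_lang n m a" "in_lang n m b" "in_lang n m c" using GLP_lang[OF h(1)] by auto
  have 2: "GLP n m (Imp (Box k (Imp b c)) (Imp (Box k b) (Box k c)))" using GLP.axK h l by blast
  show ?thesis by (rule thm2[OF 1 2]) (use l h in auto)
qed

lemma box4: "k < n \<Longrightarrow> in_lang n m a \<Longrightarrow> GLP n m (Imp (Box k a) (Box k (Box k a)))"
proof -
  assume k: "k < n" and a: "in_lang n m a"
  define c where "c = Conj a (Box k a)"
  have lc: "in_lang n m c" using k a by (simp add: c_def)
  have 1: "GLP n m (Imp (Box k c) (Box k a))"
    by (rule box_mono[OF _ k], rule thm_taut) (use lc a in \<open>auto simp: c_def\<close>)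
  have 2: "GLP n m (Imp (Box k c) (Box k (Box k a)))"
    by (rule box_mono[OF _ k], rule thm_taut) (use lc a k in \<open>auto simp: c_def\<close>)
  have 3: "GLP n m (Imp a (Imp (Box k c) c))"
    by (rule thm1[OF 1]) (use lc a k in \<open>auto simp: c_def\<close>)
  have 4: "GLP n m (Imp (Box k a) (Box k (Imp (Box k c) c)))" by (rule box_mono[OF 3 k])
  have 5: "GLP n m (Imp (Box k (Imp (Box k c) c)) (Box k c))" using GLP.axL[OF k lc] .
  show ?thesis by (rule thm3[OF 4 5 2]) (use a k in auto)
qed

lemma dia_mono: "GLP n m (Imp a b) \<Longrightarrow> k < n \<Longrightarrow> GLP n m (Imp (Dia k a) (Dia k b))"
proof -
  assume h: "GLP n m (Imp a b)" "k < n"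
  have l: "in_lang n m a" "in_lang n m b" using imp_lang[OF h(1)] by auto
  have "GLP n m (Imp (Neg b) (Neg a))" by (rule thm1[OF h(1)]) (use l in auto)
  then have "GLP n m (Imp (Box k (Neg b)) (Box k (Neg a)))" using box_mono h by blast
  then show ?thesis by (rule thm1) (use l h in auto)
qed

lemma dia_trans: "k < n \<Longrightarrow> in_lang n m a \<Longrightarrow> GLP n m (Imp (Dia k (Dia k a)) (Dia k a))"
proof -
  assume k: "k < n" and a: "in_lang n m a"
  have 1: "GLP n m (Imp (Box k (Neg a)) (Box k (Box k (Neg a))))" using box4 k a by simp
  have 2: "GLP n m (Imp (Box k (Box k (Neg a))) (Box k (Neg (Dia k a))))"
    by (rule box_mono[OF _ k], rule thm_taut) (use a k in auto)
  show ?thesis by (rule thm2[OF 1 2]) (use a k in auto)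
qed

lemma dia_disj: "k < n \<Longrightarrow> in_lang n m a \<Longrightarrow> in_lang n m b \<Longrightarrow>
   GLP n m (Imp (Dia k (Disj a b)) (Disj (Dia k a) (Dia k b)))"
proof -
  assume k: "k < n" and a: "in_lang n m a" and b: "in_lang n m b"
  have "GLP n m (Imp (Neg a) (Imp (Neg b) (Neg (Disj a b))))"
    by (rule thm_taut) (use a b in auto)
  then have "GLP n m (Imp (Box k (Neg a)) (Imp (Box k (Neg b)) (Box k (Neg (Disj a b)))))"
    using box_mono2 k by blast
  then show ?thesis by (rule thm1) (use a b k in auto)
qed

lemma reflR: "1 < n \<Longrightarrow> in_lang n m c \<Longrightarrow> GLP n m (Box 1 (Imp (Box 0 c) c))"
proof -
  assume n: "1 < n" and c: "in_lang n m c"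
  have a: "GLP n m (Imp (Box 0 c) (Box 0 (Neg (Neg c))))"
    by (rule box_mono, rule thm_taut) (use n c in auto)
  have b: "GLP n m (Imp (Box 0 (Neg (Neg c))) (Box 0 c))"
    by (rule box_mono, rule thm_taut) (use n c in auto)
  have cc: "GLP n m (Imp (Dia 0 (Neg c)) (Box 1 (Dia 0 (Neg c))))"
    using GLP.axDia[of 0 1 n m "Neg c"] n c by simp
  have d: "GLP n m (Imp (Dia 0 (Neg c)) (Imp (Box 0 c) c))"
    by (rule thm1[OF a]) (use n c in auto)
  have e: "GLP n m (Imp (Box 1 (Dia 0 (Neg c))) (Box 1 (Imp (Box 0 c) c)))"
    using box_mono[OF d] n by simp
  have f: "GLP n m (Imp (Box 0 c) (Box 1 c))" using GLP.axMono[of 0 1 n m c] n c by simp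
  have g: "GLP n m (Imp (Box 1 c) (Box 1 (Imp (Box 0 c) c)))"
    by (rule box_mono, rule thm_taut) (use n c in auto)
  have h1: "GLP n m (Imp (Neg (Box 0 (Neg (Neg c)))) (Box 1 (Imp (Box 0 c) c)))"
    by (rule thm2[OF cc e]) (use n c in auto)
  have h2: "GLP n m (Imp (Box 0 (Neg (Neg c))) (Box 1 (Imp (Box 0 c) c)))"
    by (rule thm3[OF b f g]) (use n c in auto)
  show ?thesis
    by (rule thm2[OF h1 h2]) (use n c in auto)
qed



definition chf :: "fm \<Rightarrow> nat \<Rightarrow> fm \<Rightarrow> fm" where
  "chf x j y = ((\<lambda>z. Conj (Neg x) (Dia 0 z)) ^^ j) y"

lemma chf_0[simp]: "chf x 0 y = y" by (simp add: chf_def)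
lemma chf_Suc[simp]: "chf x (Suc j) y = Conj (Neg x) (Dia 0 (chf x j y))" by (simp add: chf_def)
lemma chf_Suc2: "chf x (Suc j) y = chf x j (Conj (Neg x) (Dia 0 y))"
  unfolding chf_def by (simp only: funpow_Suc_right comp_def)

lemma chf_lang: "0 < n \<Longrightarrow> in_lang n m x \<Longrightarrow> in_lang n m y \<Longrightarrow> in_lang n m (chf x j y)"
  by (induction j) auto

lemma chf_subst: "subst s (chf x j y) = chf (subst s x) j (subst s y)"
  by (induction j) auto

section \<open>Chain semantics\<close>

fun evc :: "(nat \<Rightarrow> nat \<Rightarrow> bool) \<Rightarrow> nat \<Rightarrow> fm \<Rightarrow> bool" where
  "evc V x (Var i) = V i x"
| "evc V x Bot = False"
| "evc V x (Imp a b) = (evc V x a \<longrightarrow> evc V x b)"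
| "evc V x (Box k a) = (if k = 0 then (\<forall>y<x. evc V y a) else True)"

lemma evc_simps[simp]:
  "evc V x (Neg a) = (\<not> evc V x a)"
  "evc V x (Conj a b) = (evc V x a \<and> evc V x b)"
  "evc V x (Iff a b) = (evc V x a = evc V x b)"
  "evc V x (Disj a b) = (evc V x a \<or> evc V x b)"
  "evc V x Top = True"
  "evc V x (Dia k a) = (if k = 0 then (\<exists>y<x. evc V y a) else False)"
  by (auto simp: Dia_def Neg_def Conj_def Iff_def Disj_def Top_def)

lemma evc_peval: "peval (\<lambda>f. evc V x f) a = evc V x a"
  by (induction a) auto

lemma evc_sound: "GLP n m a \<Longrightarrow> evc V x a"
proof (induction arbitrary: x rule: GLP.induct)
  case (tautI a)
  then show ?case using evc_peval[of V x a] by (auto simp: taut_def)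
next
  case (axK k a b)
  then show ?case by auto
next
  case (axL k a)
  show ?case
  proof (cases "k = 0")
    case True
    have "\<forall>y<x. evc V y a" if H: "\<forall>y<x. (\<forall>z<y. evc V z a) \<longrightarrow> evc V y a"
    proof -
      have "y < x \<longrightarrow> evc V y a" for y
      proof (induction y rule: less_induct)
        case (less y)
        then show ?case using H by auto
      qed
      then show ?thesis by auto
    qed
    then show ?thesis using True by auto
  qed auto
next
  case (axDia j k a)
  then show ?case by (auto simp: Dia_def Neg_def)
next
  case (axMono j k a)
  then show ?case by auto
next
  case (mp a b)
  then show ?case by auto
next
  case (nec k a)
  then show ?case by auto
qed

lemma evc_subst: "evc V x (subst s a) = evc (\<lambda>i y. evc V y (s i)) x a"
  by (induction a arbitrary: x) auto

lemma evc_chf: "(\<forall>y\<le>x. \<not> evc V y c) \<Longrightarrow> evc V x (chf c j Top) = (j \<le> x)"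
proof (induction j arbitrary: x)
  case 0
  then show ?case by simp
next
  case (Suc j)
  have "(\<exists>y<x. evc V y (chf c j Top)) = (\<exists>y<x. j \<le> y)"
    using Suc.IH Suc.prems by (metis less_imp_le_nat order.trans)
  also have "\<dots> = (Suc j \<le> x)" by (auto intro: exI[of _ j])
  finally show ?case using Suc.prems by auto
qed

section \<open>One-point semantics\<close>

fun evw :: "fm set \<Rightarrow> fm set \<Rightarrow> (nat \<Rightarrow> bool) \<Rightarrow> fm \<Rightarrow> bool" where
  "evw T0 T1 V (Var i) = V i"
| "evw T0 T1 V Bot = False"
| "evw T0 T1 V (Imp a b) = (evw T0 T1 V a \<longrightarrow> evw T0 T1 V b)"
| "evw T0 T1 V (Box k a) = (if k = 0 then a \<in> T0 else if k = 1 then a \<in> T1 else True)"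

lemma evw_peval: "peval (\<lambda>f. evw T0 T1 V f) a = evw T0 T1 V a"
  by (induction a) auto

lemma evw_sound:
  assumes n: "1 < n"
    and th0: "\<And>a. GLP n m a \<Longrightarrow> a \<in> T0" and th1: "\<And>a. GLP n m a \<Longrightarrow> a \<in> T1"
    and mp0: "\<And>a b. a \<in> T0 \<Longrightarrow> Imp a b \<in> T0 \<Longrightarrow> b \<in> T0"
    and mp1: "\<And>a b. a \<in> T1 \<Longrightarrow> Imp a b \<in> T1 \<Longrightarrow> b \<in> T1"
    and nec0: "\<And>a. a \<in> T0 \<Longrightarrow> Box 0 a \<in> T0"
    and nec1: "\<And>a. a \<in> T1 \<Longrightarrow> Box 1 a \<in> T1"
    and sub: "T0 \<subseteq> T1"
    and dia: "\<And>a. in_lang n m a \<Longrightarrow> Neg a \<notin> T0 \<Longrightarrow> Dia 0 a \<in> T1"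
  shows "GLP n m a \<Longrightarrow> evw T0 T1 V a"
proof (induction rule: GLP.induct)
  case (tautI a)
  then show ?case using evw_peval[of T0 T1 V a] by (auto simp: taut_def)
next
  case (axK k a b)
  then show ?case using mp0[of a b] mp1[of a b] by simp
next
  case (axL k a)
  have L0: "a \<in> T0" if A: "Imp (Box 0 a) a \<in> T0"
  proof -
    have B: "Box 0 (Imp (Box 0 a) a) \<in> T0" by (rule nec0[OF A])
    have C: "Imp (Box 0 (Imp (Box 0 a) a)) (Box 0 a) \<in> T0"
      using th0 GLP.axL[of 0 n m a] n axL by simp
    have D: "Box 0 a \<in> T0" by (rule mp0[OF B C])
    show ?thesis by (rule mp0[OF D A])
  qed
  have L1: "a \<in> T1" if A: "Imp (Box 1 a) a \<in> T1"
  proof -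
    have B: "Box 1 (Imp (Box 1 a) a) \<in> T1" by (rule nec1[OF A])
    have C: "Imp (Box 1 (Imp (Box 1 a) a)) (Box 1 a) \<in> T1"
      using th1 GLP.axL[of 1 n m a] n axL by simp
    have D: "Box 1 a \<in> T1" by (rule mp1[OF B C])
    show ?thesis by (rule mp1[OF D A])
  qed
  show ?case using L0 L1 by simp
next
  case (axDia j k a)
  then have k: "k \<noteq> 0" by simp
  show ?case
  proof (cases "k = 1")
    case True
    then have "j = 0" using axDia by simp
    have "Neg a \<notin> T0 \<Longrightarrow> Dia 0 a \<in> T1" using dia[of a] axDia by blast
    then show ?thesis using True k \<open>j = 0\<close> by (simp add: Dia_def Neg_def)
  next
    case False
    then show ?thesis using k by (simp add: Dia_def Neg_def)
  qed
next
  case (axMono j k a)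
  then show ?case using sub by auto
next
  case (mp a b)
  then show ?case by simp
next
  case (nec k a)
  then show ?case using th0[of a] th1[of a] by simp
qed

section \<open>The unifiers w_J\<close>

lemma w_unif: "1 < n \<Longrightarrow> p < m \<Longrightarrow> GLP n m (Box 1 (Imp (Neg (Var p)) (chf (Var p) J Top)))"
proof (induction J)
  case 0
  have "GLP n m (Imp (Neg (Var p)) Top)" by (rule thm_taut) (use 0 in auto)
  then show ?case using GLP.nec 0 by simp
next
  case (Suc J)
  define c where "c = chf (Var p) J Top"
  have lc: "in_lang n m c" unfolding c_def using Suc.prems by (intro chf_lang) auto
  have IH: "GLP n m (Box 1 (Imp (Neg (Var p)) c))" using Suc by (simp add: c_def)
  have R: "GLP n m (Box 1 (Imp (Box 0 (Neg c)) (Neg c)))" using reflR[of n m "Neg c"] Suc.prems lc by simp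
  have T: "GLP n m (Imp (Imp (Neg (Var p)) c) (Imp (Imp (Box 0 (Neg c)) (Neg c))
        (Imp (Neg (Var p)) (Conj (Neg (Var p)) (Dia 0 c)))))"
    by (rule thm_taut) (use Suc.prems lc in auto)
  have B: "GLP n m (Imp (Box 1 (Imp (Neg (Var p)) c)) (Imp (Box 1 (Imp (Box 0 (Neg c)) (Neg c)))
        (Box 1 (Imp (Neg (Var p)) (Conj (Neg (Var p)) (Dia 0 c))))))"
    using box_mono2[OF T] Suc.prems by simp
  have "GLP n m (Box 1 (Imp (Neg (Var p)) (Conj (Neg (Var p)) (Dia 0 c))))"
    using GLP.mp[OF GLP.mp[OF B IH] R] .
  then show ?case by (simp add: c_def)
qed



instance fm :: countable by countable_datatype

definition cons :: "nat \<Rightarrow> nat \<Rightarrow> fm set \<Rightarrow> bool" where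
  "cons n m X = (X \<subseteq> {a. in_lang n m a} \<and> (\<forall>xs. set xs \<subseteq> X \<longrightarrow> \<not> GLP n m (imps xs Bot)))"

definition mcs :: "nat \<Rightarrow> nat \<Rightarrow> fm set \<Rightarrow> bool" where
  "mcs n m X = (cons n m X \<and> (\<forall>a. in_lang n m a \<longrightarrow> a \<in> X \<or> Neg a \<in> X))"

lemma mcs_lang: "mcs n m X \<Longrightarrow> a \<in> X \<Longrightarrow> in_lang n m a"
  by (auto simp: mcs_def cons_def)

lemma mcs_deriv:
  assumes X: "mcs n m X" and xs: "set xs \<subseteq> X" and d: "GLP n m (imps xs b)"
  shows "b \<in> X"
proof (rule ccontr)
  assume "b \<notin> X"
  have lb: "in_lang n m b" using GLP_lang[OF d] by (simp add: lang_imps)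
  have "Neg b \<in> X" using X lb \<open>b \<notin> X\<close> by (auto simp: mcs_def)
  then have s: "set (Neg b # xs) \<subseteq> X" using xs by auto
  have "GLP n m (imps (Neg b # xs) Bot)"
    by (rule thm1[OF d]) (use GLP_lang[OF d] in \<open>auto simp: lang_imps peval_imps\<close>)
  moreover have "\<not> GLP n m (imps (Neg b # xs) Bot)" using X s unfolding mcs_def cons_def by blast
  ultimately show False by blast
qed

lemma mcs_thm: "mcs n m X \<Longrightarrow> GLP n m a \<Longrightarrow> a \<in> X"
  using mcs_deriv[of n m X "[]" a] by simp

lemma mcs_mp1: "mcs n m X \<Longrightarrow> a \<in> X \<Longrightarrow> GLP n m (Imp a b) \<Longrightarrow> b \<in> X"
  using mcs_deriv[of n m X "[a]" b] by simp

lemma mcs_mp2: "mcs n m X \<Longrightarrow> a \<in> X \<Longrightarrow> a' \<in> X \<Longrightarrow> GLP n m (Imp a (Imp a' b)) \<Longrightarrow> b \<in> X"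
  using mcs_deriv[of n m X "[a,a']" b] by simp

lemma mcs_neg: "mcs n m X \<Longrightarrow> Neg a \<in> X \<Longrightarrow> a \<notin> X"
proof
  assume X: "mcs n m X" and na: "Neg a \<in> X" and a: "a \<in> X"
  have la: "in_lang n m a" using mcs_lang[OF X a] .
  have "GLP n m (imps [a, Neg a] Bot)" by (rule thm_taut) (use la in auto)
  moreover have "set [a, Neg a] \<subseteq> X" using a na by simp
  ultimately show False using X unfolding mcs_def cons_def by blast
qed

lemma mcs_not: "mcs n m X \<Longrightarrow> in_lang n m a \<Longrightarrow> a \<notin> X \<Longrightarrow> Neg a \<in> X"
  by (auto simp: mcs_def)

section \<open>Lindenbaum\<close>

primrec ext :: "nat \<Rightarrow> nat \<Rightarrow> fm set \<Rightarrow> nat \<Rightarrow> fm set" where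
  "ext n m X 0 = X"
| "ext n m X (Suc k) = (if in_lang n m (from_nat k) \<and> cons n m (insert (from_nat k) (ext n m X k))
     then insert (from_nat k) (ext n m X k) else ext n m X k)"

lemma ext_mono: "k \<le> k' \<Longrightarrow> ext n m X k \<subseteq> ext n m X k'"
proof (induction k' rule: dec_induct)
  case base then show ?case by simp
next
  case (step k') then show ?case by auto
qed

lemma ext_cons: "cons n m X \<Longrightarrow> cons n m (ext n m X k)"
  by (induction k) auto

lemma ext_fin: "set xs \<subseteq> (\<Union>k. ext n m X k) \<Longrightarrow> \<exists>k. set xs \<subseteq> ext n m X k"
proof (induction xs)
  case Nil then show ?case by simp
next
  case (Cons x xs)
  then obtain k where k: "set xs \<subseteq> ext n m X k" by auto
  obtain k' where k': "x \<in> ext n m X k'" using Cons.prems by auto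
  have "set xs \<subseteq> ext n m X (max k k')" using k ext_mono[of k "max k k'" n m X] by auto
  moreover have "x \<in> ext n m X (max k k')" using k' ext_mono[of k' "max k k'" n m X] by auto
  ultimately show ?case by auto
qed

lemma not_cons_insert:
  assumes "X \<subseteq> {a. in_lang n m a}" "in_lang n m a" "\<not> cons n m (insert a X)"
  shows "\<exists>xs. set xs \<subseteq> X \<and> GLP n m (imps xs (Neg a))"
proof -
  obtain xs where xs: "set xs \<subseteq> insert a X" "GLP n m (imps xs Bot)"
    using assms by (auto simp: cons_def)
  let ?ys = "filter (\<lambda>x. x \<noteq> a) xs"
  have "GLP n m (imps ?ys (Neg a))"
  proof (rule thm1[OF xs(2)])
    show "in_lang n m (imps ?ys (Neg a))" using GLP_lang[OF xs(2)] assms(2) by (auto simp: lang_imps)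
    show "\<forall>v. peval v (imps xs Bot) \<longrightarrow> peval v (imps ?ys (Neg a))"
      by (auto simp: peval_imps)
  qed
  moreover have "set ?ys \<subseteq> X" using xs(1) by auto
  ultimately show ?thesis by blast
qed

lemma lindenbaum:
  assumes X: "cons n m X"
  shows "\<exists>Y. mcs n m Y \<and> X \<subseteq> Y"
proof -
  define Y where "Y = (\<Union>k. ext n m X k)"
  have lY: "Y \<subseteq> {a. in_lang n m a}"
    using ext_cons[OF X] by (auto simp: Y_def cons_def)
  have cY: "cons n m Y"
  proof -
    have "\<not> GLP n m (imps xs Bot)" if "set xs \<subseteq> Y" for xs
    proof -
      have "set xs \<subseteq> (\<Union>k. ext n m X k)" using that by (simp add: Y_def)
      then obtain k where "set xs \<subseteq> ext n m X k" using ext_fin by blast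
      then show ?thesis using ext_cons[OF X, of k] by (auto simp: cons_def)
    qed
    then show ?thesis using lY by (auto simp: cons_def)
  qed
  have key: "\<exists>xs. set xs \<subseteq> Y \<and> GLP n m (imps xs (Neg a))" if la: "in_lang n m a" and na: "a \<notin> Y" for a
  proof -
    define k where "k = to_nat a"
    have fa: "from_nat k = a" by (simp add: k_def)
    have "ext n m X (Suc k) \<subseteq> Y" unfolding Y_def by (rule UN_upper) simp
    then have "\<not> cons n m (insert a (ext n m X k))" using na la fa by auto
    moreover have "ext n m X k \<subseteq> {a. in_lang n m a}" using ext_cons[OF X, of k] by (auto simp: cons_def)
    ultimately obtain xs where "set xs \<subseteq> ext n m X k" "GLP n m (imps xs (Neg a))"
      using not_cons_insert la by blast
    moreover have "ext n m X k \<subseteq> Y" unfolding Y_def by (rule UN_upper) simp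
    ultimately show ?thesis by blast
  qed
  have "a \<in> Y \<or> Neg a \<in> Y" if la: "in_lang n m a" for a
  proof (rule ccontr)
    assume "\<not> (a \<in> Y \<or> Neg a \<in> Y)"
    then obtain xs ys where xs: "set xs \<subseteq> Y" "GLP n m (imps xs (Neg a))"
      and ys: "set ys \<subseteq> Y" "GLP n m (imps ys (Neg (Neg a)))"
      using key[of a] key[of "Neg a"] la by auto
    have "GLP n m (imps (xs @ ys) Bot)"
      by (rule thm2[OF xs(2) ys(2)]) (use GLP_lang[OF xs(2)] GLP_lang[OF ys(2)] in \<open>auto simp: lang_imps peval_imps\<close>)
    moreover have "set (xs @ ys) \<subseteq> Y" using xs(1) ys(1) by simp
    ultimately show False using cY unfolding cons_def by blast
  qed
  then have "mcs n m Y" using cY by (auto simp: mcs_def)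
  moreover have "X \<subseteq> Y" unfolding Y_def using ext.simps(1)[of n m X] by (metis UN_upper UNIV_I)
  ultimately show ?thesis by blast
qed



context
  fixes n m :: nat and \<phi> :: fm
  assumes n: "1 < n" and l\<phi>: "in_lang n m \<phi>"
begin

definition Zc :: "fm \<Rightarrow> bool" where
  "Zc d = (\<exists>j. GLP n m (Neg (chf \<phi> j d)))"

lemma refut_step: "GLP n m (Neg (chf \<phi> j x)) \<Longrightarrow> GLP n m (Neg (chf \<phi> (Suc j) x))"
proof -
  assume h: "GLP n m (Neg (chf \<phi> j x))"
  have lx: "in_lang n m (chf \<phi> j x)" using GLP_lang[OF h] by simp
  have "GLP n m (Box 0 (Neg (chf \<phi> j x)))" using GLP.nec[OF _ h] n by simp
  then show ?thesis by (rule thm1) (use lx l\<phi> n in auto)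
qed

lemma refut_mono: "GLP n m (Neg (chf \<phi> j x)) \<Longrightarrow> j \<le> j' \<Longrightarrow> GLP n m (Neg (chf \<phi> j' x))"
proof -
  assume h: "GLP n m (Neg (chf \<phi> j x))" and jj: "j \<le> j'"
  show ?thesis using jj
  proof (induction j' rule: dec_induct)
    case base then show ?case using h .
  next
    case (step k) then show ?case using refut_step by blast
  qed
qed

lemma chf_mono: "GLP n m (Imp x y) \<Longrightarrow> GLP n m (Imp (chf \<phi> j x) (chf \<phi> j y))"
proof (induction j)
  case 0 then show ?case by simp
next
  case (Suc j)
  have d: "GLP n m (Imp (Dia 0 (chf \<phi> j x)) (Dia 0 (chf \<phi> j y)))"
    using dia_mono[OF Suc.IH[OF Suc.prems]] n by simp
  show ?case by simp (rule thm1[OF d], use GLP_lang[OF d] l\<phi> in auto)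
qed

lemma chf_disj: "in_lang n m x \<Longrightarrow> in_lang n m y \<Longrightarrow>
   GLP n m (Imp (chf \<phi> j (Disj x y)) (Disj (chf \<phi> j x) (chf \<phi> j y)))"
proof (induction j)
  case 0 then show ?case by (intro thm_taut) auto
next
  case (Suc j)
  have lx: "in_lang n m (chf \<phi> j x)" "in_lang n m (chf \<phi> j y)"
    using Suc.prems n l\<phi> by (auto intro: chf_lang)
  have d1: "GLP n m (Imp (Dia 0 (chf \<phi> j (Disj x y))) (Dia 0 (Disj (chf \<phi> j x) (chf \<phi> j y))))"
    using dia_mono[OF Suc.IH[OF Suc.prems]] n by simp
  have d2: "GLP n m (Imp (Dia 0 (Disj (chf \<phi> j x) (chf \<phi> j y))) (Disj (Dia 0 (chf \<phi> j x)) (Dia 0 (chf \<phi> j y))))"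
    using dia_disj lx n by simp
  show ?case by simp (rule thm2[OF d1 d2], use GLP_lang[OF d1] l\<phi> lx in auto)
qed

lemma Zc_disj: "Zc x \<Longrightarrow> Zc y \<Longrightarrow> in_lang n m x \<Longrightarrow> in_lang n m y \<Longrightarrow> Zc (Disj x y)"
proof -
  assume "Zc x" "Zc y" and lx: "in_lang n m x" and ly: "in_lang n m y"
  then obtain j1 j2 where "GLP n m (Neg (chf \<phi> j1 x))" "GLP n m (Neg (chf \<phi> j2 y))"
    by (auto simp: Zc_def)
  then have a: "GLP n m (Neg (chf \<phi> (max j1 j2) x))" and b: "GLP n m (Neg (chf \<phi> (max j1 j2) y))"
    using refut_mono by auto
  have c: "GLP n m (Imp (chf \<phi> (max j1 j2) (Disj x y)) (Disj (chf \<phi> (max j1 j2) x) (chf \<phi> (max j1 j2) y)))"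
    using chf_disj lx ly by blast
  have "GLP n m (Neg (chf \<phi> (max j1 j2) (Disj x y)))"
    by (rule thm3[OF a b c]) (use GLP_lang[OF c] in auto)
  then show ?thesis by (auto simp: Zc_def)
qed

lemma Zc_imp: "GLP n m (Imp x y) \<Longrightarrow> Zc y \<Longrightarrow> Zc x"
proof -
  assume h: "GLP n m (Imp x y)" "Zc y"
  then obtain j where j: "GLP n m (Neg (chf \<phi> j y))" by (auto simp: Zc_def)
  have c: "GLP n m (Imp (chf \<phi> j x) (chf \<phi> j y))" using chf_mono h(1) by blast
  have "GLP n m (Neg (chf \<phi> j x))" by (rule thm2[OF j c]) (use GLP_lang[OF c] in auto)
  then show ?thesis by (auto simp: Zc_def)
qed

lemma Zc_shift: "Zc (Conj (Neg \<phi>) (Dia 0 g)) \<Longrightarrow> Zc g"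
  by (auto simp: Zc_def chf_Suc2[symmetric] simp del: chf_Suc)

lemma Zc_Bot: "Zc Bot"
proof -
  have "GLP n m (Neg (chf \<phi> 0 Bot))" by simp (rule thm_taut, auto)
  then show ?thesis unfolding Zc_def by (rule exI)
qed

definition NN :: "fm set" where "NN = {Neg d | d. in_lang n m d \<and> Zc d}"

lemma NN_list: "set xs \<subseteq> NN \<Longrightarrow> \<exists>d. in_lang n m d \<and> Zc d \<and> (\<forall>x\<in>set xs. GLP n m (Imp (Neg d) x))"
proof (induction xs)
  case Nil then show ?case using Zc_Bot by (intro exI[of _ Bot]) auto
next
  case (Cons x xs)
  then obtain d where d: "in_lang n m d" "Zc d" "\<forall>x\<in>set xs. GLP n m (Imp (Neg d) x)" by auto
  obtain d1 where d1: "x = Neg d1" "in_lang n m d1" "Zc d1" using Cons.prems by (auto simp: NN_def)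
  have z: "Zc (Disj d1 d)" using Zc_disj d d1 by blast
  have a: "GLP n m (Imp (Neg (Disj d1 d)) x)" using d1 d by (intro thm_taut) auto
  have b: "GLP n m (Imp (Neg (Disj d1 d)) y)" if "y \<in> set xs" for y
  proof -
    have c: "GLP n m (Imp (Neg d) y)" using d(3) that by blast
    show ?thesis by (rule thm1[OF c]) (use GLP_lang[OF c] d1 in auto)
  qed
  show ?case using z a b d d1 by (intro exI[of _ "Disj d1 d"]) auto
qed

lemma cons_PN:
  assumes P: "P \<subseteq> {a. in_lang n m a}"
    and H: "\<And>ps. set ps \<subseteq> P \<Longrightarrow> \<exists>\<delta>. in_lang n m \<delta> \<and> \<not> Zc \<delta> \<and> (\<forall>x\<in>set ps. GLP n m (Imp \<delta> x))"
  shows "cons n m (P \<union> NN)"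
proof -
  have l: "P \<union> NN \<subseteq> {a. in_lang n m a}" using P by (auto simp: NN_def)
  have "\<not> GLP n m (imps xs Bot)" if xs: "set xs \<subseteq> P \<union> NN" for xs
  proof
    assume th: "GLP n m (imps xs Bot)"
    define ps where "ps = filter (\<lambda>x. x \<in> P) xs"
    define ns where "ns = filter (\<lambda>x. x \<notin> P) xs"
    have "set ps \<subseteq> P" by (auto simp: ps_def)
    then obtain \<delta> where de: "in_lang n m \<delta>" "\<not> Zc \<delta>" "\<forall>x\<in>set ps. GLP n m (Imp \<delta> x)" using H by blast
    have "set ns \<subseteq> NN" using xs by (auto simp: ns_def)
    then obtain d where d: "in_lang n m d" "Zc d" "\<forall>x\<in>set ns. GLP n m (Imp (Neg d) x)" using NN_list by blast
    have "GLP n m (Imp \<delta> d)"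
    proof (rule thm_from[of "imps xs Bot # map (Imp \<delta>) ps @ map (Imp (Neg d)) ns"])
      show "\<forall>a\<in>set (imps xs Bot # map (Imp \<delta>) ps @ map (Imp (Neg d)) ns). GLP n m a"
        using th de d by auto
      show "in_lang n m (Imp \<delta> d)" using de d by simp
      show "\<forall>v. (\<forall>a\<in>set (imps xs Bot # map (Imp \<delta>) ps @ map (Imp (Neg d)) ns). peval v a) \<longrightarrow>
          peval v (Imp \<delta> d)"
      proof (intro allI impI)
        fix v assume A: "\<forall>a\<in>set (imps xs Bot # map (Imp \<delta>) ps @ map (Imp (Neg d)) ns). peval v a"
        show "peval v (Imp \<delta> d)"
        proof (simp, intro impI, rule ccontr)
          assume dv: "peval v \<delta>" and nd: "\<not> peval v d"
          have "peval v x" if x: "x \<in> set xs" for x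
          proof (cases "x \<in> P")
            case True
            then have "Imp \<delta> x \<in> set (imps xs Bot # map (Imp \<delta>) ps @ map (Imp (Neg d)) ns)"
              using x by (auto simp: ps_def)
            then have "peval v (Imp \<delta> x)" by (rule bspec[OF A])
            then show ?thesis using dv by simp
          next
            case False
            then have "Imp (Neg d) x \<in> set (imps xs Bot # map (Imp \<delta>) ps @ map (Imp (Neg d)) ns)"
              using x by (auto simp: ns_def)
            then have "peval v (Imp (Neg d) x)" by (rule bspec[OF A])
            then show ?thesis using nd by simp
          qed
          moreover have "peval v (imps xs Bot)" using A by simp
          ultimately show False by (simp add: peval_imps)
        qed
      qed
    qed
    then have "Zc \<delta>" using Zc_imp d by blast
    then show False using de by blast
  qed
  then show ?thesis using l by (auto simp: cons_def)
qed

lemma mcs_Z: "mcs n m G \<Longrightarrow> NN \<subseteq> G \<Longrightarrow> g \<in> G \<Longrightarrow> \<not> Zc g"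
proof
  assume G: "mcs n m G" "NN \<subseteq> G" "g \<in> G" and z: "Zc g"
  have "Neg g \<in> G" using G mcs_lang[OF G(1) G(3)] z by (auto simp: NN_def)
  then show False using mcs_neg G by blast
qed

lemma D_list: "mcs n m G \<Longrightarrow> set xs \<subseteq> {Dia 0 \<gamma> | \<gamma>. \<gamma> \<in> G} \<Longrightarrow>
   \<exists>g\<in>G. \<forall>x\<in>set xs. GLP n m (Imp (Dia 0 g) x)"
proof (induction xs)
  case Nil
  have "Top \<in> G" using mcs_thm[OF Nil.prems(1)] by (simp add: thm_taut)
  then show ?case by auto
next
  case (Cons x xs)
  then obtain g where g: "g \<in> G" "\<forall>x\<in>set xs. GLP n m (Imp (Dia 0 g) x)" by auto
  obtain g1 where g1: "x = Dia 0 g1" "g1 \<in> G" using Cons.prems by auto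
  have lg: "in_lang n m g" "in_lang n m g1" using mcs_lang Cons.prems(1) g g1 by blast+
  have gg: "Conj g1 g \<in> G"
    by (rule mcs_mp2[OF Cons.prems(1) g1(2) g(1)]) (rule thm_taut, use lg in auto)
  have a: "GLP n m (Imp (Dia 0 (Conj g1 g)) x)"
    unfolding g1 by (rule dia_mono, rule thm_taut) (use lg n in auto)
  have e: "GLP n m (Imp (Dia 0 (Conj g1 g)) (Dia 0 g))"
    by (rule dia_mono, rule thm_taut) (use lg n in auto)
  have b: "GLP n m (Imp (Dia 0 (Conj g1 g)) y)" if "y \<in> set xs" for y
  proof -
    have c: "GLP n m (Imp (Dia 0 g) y)" using g(2) that by blast
    show ?thesis by (rule thm2[OF e c]) (use GLP_lang[OF c] GLP_lang[OF e] in auto)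
  qed
  show ?case using gg a b by auto
qed

definition Succ :: "fm set \<Rightarrow> fm set" where
  "Succ G = insert (Neg \<phi>) {Dia 0 \<gamma> | \<gamma>. \<gamma> \<in> G} \<union> NN"

lemma cons_Succ: "mcs n m G \<Longrightarrow> NN \<subseteq> G \<Longrightarrow> cons n m (Succ G)"
  unfolding Succ_def
proof (rule cons_PN)
  assume G: "mcs n m G" "NN \<subseteq> G"
  show "insert (Neg \<phi>) {Dia 0 \<gamma> | \<gamma>. \<gamma> \<in> G} \<subseteq> {a. in_lang n m a}"
    using l\<phi> mcs_lang[OF G(1)] n by auto
  fix ps assume ps: "set ps \<subseteq> insert (Neg \<phi>) {Dia 0 \<gamma> | \<gamma>. \<gamma> \<in> G}"
  have "set (filter (\<lambda>x. x \<noteq> Neg \<phi>) ps) \<subseteq> {Dia 0 \<gamma> | \<gamma>. \<gamma> \<in> G}" using ps by auto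
  then obtain g where g: "g \<in> G" "\<forall>x\<in>set (filter (\<lambda>x. x \<noteq> Neg \<phi>) ps). GLP n m (Imp (Dia 0 g) x)"
    using D_list G(1) by blast
  have lg: "in_lang n m g" using mcs_lang G(1) g(1) by blast
  have nz: "\<not> Zc (Conj (Neg \<phi>) (Dia 0 g))" using Zc_shift mcs_Z[OF G g(1)] by blast
  have "GLP n m (Imp (Conj (Neg \<phi>) (Dia 0 g)) x)" if x: "x \<in> set ps" for x
  proof (cases "x = Neg \<phi>")
    case True
    then show ?thesis by (intro thm_taut) (use lg l\<phi> n in auto)
  next
    case False
    then have c: "GLP n m (Imp (Dia 0 g) x)" using g(2) x by auto
    show ?thesis by (rule thm1[OF c]) (use GLP_lang[OF c] l\<phi> in auto)
  qed
  then show "\<exists>\<delta>. in_lang n m \<delta> \<and> \<not> Zc \<delta> \<and> (\<forall>x\<in>set ps. GLP n m (Imp \<delta> x))"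
    using nz lg l\<phi> n by (intro exI[of _ "Conj (Neg \<phi>) (Dia 0 g)"]) auto
qed

primrec gch :: "nat \<Rightarrow> fm set" where
  "gch 0 = (SOME Y. mcs n m Y \<and> NN \<subseteq> Y)"
| "gch (Suc i) = (SOME Y. mcs n m Y \<and> Succ (gch i) \<subseteq> Y)"

lemma gch_props:
  assumes top: "\<not> Zc Top"
  shows "mcs n m (gch i) \<and> NN \<subseteq> gch i"
proof (induction i)
  case 0
  have "cons n m ({} \<union> NN)"
    by (rule cons_PN) (use top in \<open>auto intro!: exI[of _ Top]\<close>)
  then have "\<exists>Y. mcs n m Y \<and> NN \<subseteq> Y" using lindenbaum by simp
  then show ?case using someI_ex[of "\<lambda>Y. mcs n m Y \<and> NN \<subseteq> Y"] by simp
next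
  case (Suc i)
  have "\<exists>Y. mcs n m Y \<and> Succ (gch i) \<subseteq> Y" using lindenbaum cons_Succ Suc.IH by blast
  then have "mcs n m (gch (Suc i)) \<and> Succ (gch i) \<subseteq> gch (Suc i)"
    using someI_ex[of "\<lambda>Y. mcs n m Y \<and> Succ (gch i) \<subseteq> Y"] by simp
  then show ?case by (auto simp: Succ_def)
qed

lemma gch_succ:
  assumes top: "\<not> Zc Top"
  shows "Succ (gch i) \<subseteq> gch (Suc i)"
proof -
  have "\<exists>Y. mcs n m Y \<and> Succ (gch i) \<subseteq> Y" using lindenbaum cons_Succ gch_props[OF top] by blast
  then show ?thesis using someI_ex[of "\<lambda>Y. mcs n m Y \<and> Succ (gch i) \<subseteq> Y"] by simp
qed

lemma lemmaC:
  assumes b: "GLP n m (Box 1 \<phi>)"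
  shows "Zc Top"
proof (rule ccontr)
  assume top: "\<not> Zc Top"
  define T0 where "T0 = {\<chi>. \<forall>i. Box 0 \<chi> \<in> gch i}"
  define T1 where "T1 = {\<chi>. \<exists>N. \<forall>i\<ge>N. \<chi> \<in> gch i \<and> Box 1 \<chi> \<in> gch i}"
  have M: "\<And>i. mcs n m (gch i)" using gch_props[OF top] by blast
  have S: "\<And>i. Succ (gch i) \<subseteq> gch (Suc i)" using gch_succ[OF top] .
  have negphi: "\<And>i. Neg \<phi> \<in> gch (Suc i)" using S by (auto simp: Succ_def)
  have diasucc: "\<And>i \<gamma>. \<gamma> \<in> gch i \<Longrightarrow> Dia 0 \<gamma> \<in> gch (Suc i)" using S by (auto simp: Succ_def)
  have lang: "\<And>i a. a \<in> gch i \<Longrightarrow> in_lang n m a" using mcs_lang M by blast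
  have th0: "a \<in> T0" if "GLP n m a" for a
  proof -
    have "GLP n m (Box 0 a)" using GLP.nec[OF _ that] n by simp
    then have "\<forall>i. Box 0 a \<in> gch i" using mcs_thm[OF M] by blast
    then show ?thesis by (simp add: T0_def)
  qed
  have th1: "a \<in> T1" if "GLP n m a" for a
  proof -
    have "GLP n m (Box 1 a)" using GLP.nec[OF _ that] n by simp
    then have "\<forall>i\<ge>0. a \<in> gch i \<and> Box 1 a \<in> gch i" using mcs_thm[OF M] that by blast
    then show ?thesis unfolding T1_def by blast
  qed
  have mp0: "b \<in> T0" if "a \<in> T0" "Imp a b \<in> T0" for a b
  proof -
    have "Box 0 b \<in> gch i" for i
    proof -
      have 1: "Box 0 (Imp a b) \<in> gch i" "Box 0 a \<in> gch i" using that by (auto simp: T0_def)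
      have la: "in_lang n m a" "in_lang n m b" using lang[OF 1(1)] by auto
      have "GLP n m (Imp (Box 0 (Imp a b)) (Imp (Box 0 a) (Box 0 b)))" using GLP.axK la n by simp
      then show ?thesis using mcs_mp2[OF M 1] by blast
    qed
    then show ?thesis by (auto simp: T0_def)
  qed
  have mp1: "b \<in> T1" if A1: "a \<in> T1" and A2: "Imp a b \<in> T1" for a b
  proof -
    obtain N1 where N1: "\<forall>i\<ge>N1. a \<in> gch i \<and> Box 1 a \<in> gch i"
      using A1 unfolding T1_def by blast
    obtain N2 where N2: "\<forall>i\<ge>N2. Imp a b \<in> gch i \<and> Box 1 (Imp a b) \<in> gch i"
      using A2 unfolding T1_def by blast
    have "b \<in> gch i \<and> Box 1 b \<in> gch i" if i: "i \<ge> max N1 N2" for i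
    proof -
      have 1: "a \<in> gch i" "Box 1 a \<in> gch i" "Imp a b \<in> gch i" "Box 1 (Imp a b) \<in> gch i"
        using N1 N2 i by auto
      have la: "in_lang n m a" "in_lang n m b" using lang[OF 1(3)] by auto
      have t: "GLP n m (Imp a (Imp (Imp a b) b))" by (rule thm_taut) (use la in auto)
      have k: "GLP n m (Imp (Box 1 (Imp a b)) (Imp (Box 1 a) (Box 1 b)))" using GLP.axK la n by simp
      show ?thesis using mcs_mp2[OF M 1(1) 1(3) t] mcs_mp2[OF M 1(4) 1(2) k] by blast
    qed
    then have "\<forall>i\<ge>max N1 N2. b \<in> gch i \<and> Box 1 b \<in> gch i" by blast
    then show ?thesis unfolding T1_def by blast
  qed
  have nec0: "Box 0 a \<in> T0" if "a \<in> T0" for a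
  proof -
    have "Box 0 (Box 0 a) \<in> gch i" for i
    proof -
      have 1: "Box 0 a \<in> gch i" using that by (auto simp: T0_def)
      have "GLP n m (Imp (Box 0 a) (Box 0 (Box 0 a)))" using box4 lang[OF 1] n by simp
      then show ?thesis using mcs_mp1[OF M 1] by blast
    qed
    then show ?thesis by (auto simp: T0_def)
  qed
  have nec1: "Box 1 a \<in> T1" if A: "a \<in> T1" for a
  proof -
    obtain N where N: "\<forall>i\<ge>N. a \<in> gch i \<and> Box 1 a \<in> gch i" using A unfolding T1_def by blast
    have "Box 1 a \<in> gch i \<and> Box 1 (Box 1 a) \<in> gch i" if i: "i \<ge> N" for i
    proof -
      have 1: "Box 1 a \<in> gch i" using N i by auto
      have "GLP n m (Imp (Box 1 a) (Box 1 (Box 1 a)))" using box4 lang[OF 1] n by simp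
      then show ?thesis using mcs_mp1[OF M 1] 1 by blast
    qed
    then have "\<forall>i\<ge>N. Box 1 a \<in> gch i \<and> Box 1 (Box 1 a) \<in> gch i" by blast
    then show ?thesis unfolding T1_def by blast
  qed
  have sub: "T0 \<subseteq> T1"
  proof
    fix c assume c: "c \<in> T0"
    have "c \<in> gch i \<and> Box 1 c \<in> gch i" for i
    proof -
      have 1: "Box 0 c \<in> gch i" "Box 0 c \<in> gch (Suc i)" using c unfolding T0_def by blast+
      have lc: "in_lang n m c" using lang[OF 1(1)] by simp
      have "GLP n m (Imp (Box 0 c) (Box 1 c))" using GLP.axMono[of 0 1 n m c] n lc by simp
      then have a: "Box 1 c \<in> gch i" using mcs_mp1[OF M 1(1)] by blast
      have "c \<in> gch i"
      proof (rule ccontr)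
        assume "c \<notin> gch i"
        then have "Neg c \<in> gch i" using mcs_not M lc by blast
        then have d: "Dia 0 (Neg c) \<in> gch (Suc i)" using diasucc by blast
        have "GLP n m (Imp (Box 0 c) (Box 0 (Neg (Neg c))))"
          by (rule box_mono, rule thm_taut) (use lc n in auto)
        then have "Box 0 (Neg (Neg c)) \<in> gch (Suc i)" using mcs_mp1[OF M 1(2)] by blast
        moreover have "Neg (Box 0 (Neg (Neg c))) \<in> gch (Suc i)" using d by (simp add: Dia_def)
        ultimately show False using mcs_neg M by blast
      qed
      then show ?thesis using a by blast
    qed
    then show "c \<in> T1" by (auto simp: T1_def)
  qed
  have dia: "Dia 0 a \<in> T1" if la: "in_lang n m a" and na: "Neg a \<notin> T0" for a
  proof -
    obtain i where "Box 0 (Neg a) \<notin> gch i" using na by (auto simp: T0_def)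
    moreover have "in_lang n m (Box 0 (Neg a))" using la n by simp
    ultimately have "Neg (Box 0 (Neg a)) \<in> gch i" using mcs_not[OF M] by blast
    then have di: "Dia 0 a \<in> gch i" by (simp add: Dia_def)
    have "Dia 0 a \<in> gch j" if "i \<le> j" for j
      using that
    proof (induction j rule: dec_induct)
      case base then show ?case using di .
    next
      case (step k)
      have "Dia 0 (Dia 0 a) \<in> gch (Suc k)" using diasucc step.IH by blast
      moreover have "GLP n m (Imp (Dia 0 (Dia 0 a)) (Dia 0 a))" using dia_trans la n by simp
      ultimately show ?case using mcs_mp1 M by blast
    qed
    moreover have "GLP n m (Imp (Dia 0 a) (Box 1 (Dia 0 a)))" using GLP.axDia[of 0 1 n m a] la n by simp
    ultimately have "\<forall>j\<ge>i. Dia 0 a \<in> gch j \<and> Box 1 (Dia 0 a) \<in> gch j" using mcs_mp1 M by blast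
    then show ?thesis by (auto simp: T1_def)
  qed
  have "evw T0 T1 (\<lambda>_. False) (Box 1 \<phi>)"
    by (rule evw_sound[where n=n and m=m, OF n th0 th1 mp0 mp1 nec0 nec1 sub dia b])
  then have "\<phi> \<in> T1" by simp
  then obtain N where "\<forall>i\<ge>N. \<phi> \<in> gch i" by (auto simp: T1_def)
  moreover have "N \<le> Suc N" by simp
  ultimately have "\<phi> \<in> gch (Suc N)" by blast
  then show False using negphi mcs_neg M by blast
qed

lemma lemmaC': "GLP n m (Box 1 \<phi>) \<Longrightarrow> \<exists>J. GLP n m (Neg (chf \<phi> J Top))"
  using lemmaC unfolding Zc_def by blast

end



definition wJ :: "nat \<Rightarrow> nat \<Rightarrow> nat \<Rightarrow> fm" where
  "wJ p J = (\<lambda>i. if i = p then Imp (Neg (Var p)) (chf (Var p) J Top) else Var i)"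

lemma w_is_subst: "0 < n \<Longrightarrow> p < m \<Longrightarrow> is_subst n m (wJ p J)"
  by (auto simp: is_subst_def wJ_def intro!: chf_lang)

lemma w_unifier: "1 < n \<Longrightarrow> p < m \<Longrightarrow> unifier n m (wJ p J) (Box 1 (Var p))"
  using w_is_subst[of n p m J] w_unif[of n p m J] by (simp add: unifier_def wJ_def)

lemma less_s_w:
  assumes s: "is_subst n m s" and p: "p < m" and r: "GLP n m (Neg (chf (s p) J Top))"
  shows "less_gen n m s (wJ p J)"
  unfolding less_gen_def
proof (intro exI[of _ s] conjI allI impI)
  show "is_subst n m s" by (rule s)
  fix i assume i: "i < m"
  have li: "in_lang n m (s i)" using s i by (simp add: is_subst_def)
  show "GLP n m (Iff (s i) (subst s (wJ p J i)))"
  proof (cases "i = p")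
    case True
    have "subst s (wJ p J i) = Imp (Neg (s p)) (chf (s p) J Top)"
      using True by (simp add: wJ_def chf_subst)
    then show ?thesis using True
      by simp (rule thm1[OF r], use GLP_lang[OF r] li in auto)
  next
    case False
    then show ?thesis using li by (simp add: wJ_def) (rule thm_taut, auto)
  qed
qed

lemma not_less_w_s:
  assumes p: "p < m" and r: "GLP n m (Neg (chf (s p) J Top))"
  shows "\<not> less_gen n m (wJ p (Suc J)) s"
proof
  assume "less_gen n m (wJ p (Suc J)) s"
  then obtain \<theta> where th: "GLP n m (Iff (wJ p (Suc J) p) (subst \<theta> (s p)))"
    using p by (auto simp: less_gen_def)
  define V :: "nat \<Rightarrow> nat \<Rightarrow> bool" where "V = (\<lambda>i x. False)"
  define \<chi> where "\<chi> = subst \<theta> (s p)"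
  have lhs: "\<not> evc V x (wJ p (Suc J) p)" if "x \<le> J" for x
  proof -
    have "evc V x (chf (Var p) (Suc J) Top) = (Suc J \<le> x)"
      by (rule evc_chf) (simp add: V_def)
    then show ?thesis using that by (simp add: wJ_def V_def)
  qed
  have chi: "\<not> evc V x \<chi>" if "x \<le> J" for x
    using evc_sound[OF th, of V x] lhs[OF that] by (simp add: \<chi>_def)
  have "evc V J (chf \<chi> J Top) = (J \<le> J)"
    by (rule evc_chf) (use chi in auto)
  moreover have "\<not> evc V J (chf \<chi> J Top)"
  proof -
    have "evc (\<lambda>i y. evc V y (\<theta> i)) J (Neg (chf (s p) J Top))" using evc_sound[OF r] by blast
    then have "evc V J (subst \<theta> (Neg (chf (s p) J Top)))" by (simp only: evc_subst)
    then show ?thesis by (simp add: chf_subst \<chi>_def)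
  qed
  ultimately show False by simp
qed

theorem mainTheorem1:
  fixes n m p :: nat
  assumes "n > 1" and "m \<ge> 1" and "p < m"
  shows "unifiable n m (Box 1 (Var p))
       \<and> \<not> (\<exists>s. maximal_unifier n m s (Box 1 (Var p)))
       \<and> nullary n m"
proof -
  have n: "1 < n" and p: "p < m" using assms by auto
  have U: "unifiable n m (Box 1 (Var p))"
    using w_unifier[OF n p, of 0] by (auto simp: unifiable_def)
  have NM: "\<not> maximal_unifier n m s (Box 1 (Var p))" for s
  proof
    assume mx: "maximal_unifier n m s (Box 1 (Var p))"
    then have us: "unifier n m s (Box 1 (Var p))" by (simp add: maximal_unifier_def)
    then have s: "is_subst n m s" and b: "GLP n m (Box 1 (s p))" by (auto simp: unifier_def)
    have l: "in_lang n m (s p)" using s p by (simp add: is_subst_def)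
    obtain J where J: "GLP n m (Neg (chf (s p) J Top))"
      using lemmaC'[OF n l b] by blast
    have J': "GLP n m (Neg (chf (s p) (Suc J) Top))" using refut_step[OF n l J] .
    have "strictly_less_gen n m s (wJ p (Suc J))"
      using less_s_w[OF s p J'] not_less_w_s[where s=s and J=J and n=n, OF p J] by (simp add: strictly_less_gen_def)
    then show False using mx w_unifier[OF n p, of "Suc J"] by (auto simp: maximal_unifier_def)
  qed
  have noS: "\<not> complete_max_set n m S (Box 1 (Var p))" for S
  proof
    assume c: "complete_max_set n m S (Box 1 (Var p))"
    then obtain s where "s \<in> S" using w_unifier[OF n p, of 0] by (auto simp: complete_max_set_def)
    then show False using c NM by (auto simp: complete_max_set_def)
  qed
  have la: "in_lang n m (Box 1 (Var p))" using n p by simp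
  have "\<not> finitary n m" using U la noS unfolding finitary_def by blast
  moreover have "\<not> infinitary n m" using U la noS unfolding infinitary_def by blast
  ultimately show ?thesis using U NM by (simp add: nullary_def)
qed


end
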